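(* Let $G$ be a group and $\varphi\colon A\to B$ an isomorphism between subgroups of $G$. Let $Y$ be a group, $y\in Y$, and $\alpha\colon (G,\varphi)\to (Y,c_y)$ an embedding of HNN pairs. (1) If $Y$ is a finite group of $p$-power order ($p$ a prime), then the order of the restriction of $\varphi$ to $H(G,\varphi)$ is a power of $p$. (2) For $a\in A$ and $b\in B$, $\alpha$ is an embedding of HNN pairs $(G,c_b\circ\varphi\circ c_a)\to (Y,c_{\alpha(a)y\alpha(b)})$.
   Context: An HNN pair $(G,\varphi)$ is a group $G$ with an isomorphism $\varphi\colon A\to B$ between subgroups. For $g$ in a group, $c_g(x)=g^{-1}xg$; $(Y,c_y)$ is the HNN pair with $c_y\colon Y\to Y$. For $a\in A$, $b\in B$, $c_b\circ\varphi\circ c_a$ is an isomorphism $A\to B$. A morphism of HNN pairs $(G,\varphi\colon A\to B)\to(G',\varphi'\colon A'\to B')$ is a group homomorphism $\alpha\colon G\to G'$ with $\alpha(A)\subseteq A'$, $\alpha(B)\subseteq B'$ and $\varphi'\circ\alpha|_A=\alpha|_B\circ\varphi$; it is an embedding if $\alpha$ is injective. The core $H(G,\varphi)$ is $\bigcap_k H_k$ where $H_0=A\cap B$ and $H_{k+1}=\varphi^{-1}(H_k)\cap H_k\cap\varphi(H_k)$; $\varphi$ restricts to an automorphism of $H(G,\varphi)$. *)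

theory Defs
  imports "HOL-Algebra.Algebra" "HOL-Computational_Algebra.Primes"
begin

definition conj_by :: "('a, 'b) monoid_scheme \<Rightarrow> 'a \<Rightarrow> 'a \<Rightarrow> 'a" where
  "conj_by G g x = inv\<^bsub>G\<^esub> g \<otimes>\<^bsub>G\<^esub> x \<otimes>\<^bsub>G\<^esub> g"

definition hnn_pair :: "('a, 'b) monoid_scheme \<Rightarrow> 'a set \<Rightarrow> 'a set \<Rightarrow> ('a \<Rightarrow> 'a) \<Rightarrow> bool" where
  "hnn_pair G A B phi \<longleftrightarrow> group G \<and> subgroup A G \<and> subgroup B G \<and>
     phi \<in> iso (G\<lparr>carrier := A\<rparr>) (G\<lparr>carrier := B\<rparr>)"

definition hnn_morphism ::
  "('a, 'b) monoid_scheme \<Rightarrow> 'a set \<Rightarrow> 'a set \<Rightarrow> ('a \<Rightarrow> 'a) \<Rightarrow>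
   ('c, 'd) monoid_scheme \<Rightarrow> 'c set \<Rightarrow> 'c set \<Rightarrow> ('c \<Rightarrow> 'c) \<Rightarrow> ('a \<Rightarrow> 'c) \<Rightarrow> bool" where
  "hnn_morphism G A B phi H A2 B2 psi alpha \<longleftrightarrow>
     hnn_pair G A B phi \<and> hnn_pair H A2 B2 psi \<and>
     alpha \<in> hom G H \<and> alpha ` A \<subseteq> A2 \<and> alpha ` B \<subseteq> B2 \<and>
     (\<forall>x\<in>A. psi (alpha x) = alpha (phi x))"

definition hnn_embedding ::
  "('a, 'b) monoid_scheme \<Rightarrow> 'a set \<Rightarrow> 'a set \<Rightarrow> ('a \<Rightarrow> 'a) \<Rightarrow>
   ('c, 'd) monoid_scheme \<Rightarrow> 'c set \<Rightarrow> 'c set \<Rightarrow> ('c \<Rightarrow> 'c) \<Rightarrow> ('a \<Rightarrow> 'c) \<Rightarrow> bool" where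
  "hnn_embedding G A B phi H A2 B2 psi alpha \<longleftrightarrow>
     hnn_morphism G A B phi H A2 B2 psi alpha \<and> inj_on alpha (carrier G)"

primrec hnn_core_seq :: "'a set \<Rightarrow> 'a set \<Rightarrow> ('a \<Rightarrow> 'a) \<Rightarrow> nat \<Rightarrow> 'a set" where
  "hnn_core_seq A B phi 0 = A \<inter> B"
| "hnn_core_seq A B phi (Suc k) =
     {x \<in> A. phi x \<in> hnn_core_seq A B phi k} \<inter> hnn_core_seq A B phi k \<inter>
     phi ` hnn_core_seq A B phi k"

definition hnn_core :: "'a set \<Rightarrow> 'a set \<Rightarrow> ('a \<Rightarrow> 'a) \<Rightarrow> 'a set" where
  "hnn_core A B phi = (\<Inter>k. hnn_core_seq A B phi k)"

definition perm_order :: "'a set \<Rightarrow> ('a \<Rightarrow> 'a) \<Rightarrow> nat" where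
  "perm_order H f = (LEAST n. 0 < n \<and> (\<forall>x\<in>H. (f ^^ n) x = x))"

end

theory Submission
  imports Defs
begin

lemma (in group) cancel1 [simp]:
  "g \<in> carrier G \<Longrightarrow> w \<in> carrier G \<Longrightarrow> g \<otimes> (inv g \<otimes> w) = w"
  by (simp add: m_assoc[symmetric])

lemma (in group) cancel2 [simp]:
  "g \<in> carrier G \<Longrightarrow> w \<in> carrier G \<Longrightarrow> inv g \<otimes> (g \<otimes> w) = w"
  by (simp add: m_assoc[symmetric])

lemma conj_iter:
  assumes "group Y" "y \<in> carrier Y" "z \<in> carrier Y"
  shows "(conj_by Y y ^^ n) z = inv\<^bsub>Y\<^esub> (y [^]\<^bsub>Y\<^esub> n) \<otimes>\<^bsub>Y\<^esub> z \<otimes>\<^bsub>Y\<^esub> (y [^]\<^bsub>Y\<^esub> n)"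
proof (induction n)
  case 0
  interpret group Y by fact
  show ?case using assms by simp
next
  case (Suc n)
  interpret group Y by fact
  have yn: "y [^]\<^bsub>Y\<^esub> n \<in> carrier Y" using assms by simp
  have "(conj_by Y y ^^ Suc n) z = conj_by Y y (inv\<^bsub>Y\<^esub> (y [^]\<^bsub>Y\<^esub> n) \<otimes>\<^bsub>Y\<^esub> z \<otimes>\<^bsub>Y\<^esub> (y [^]\<^bsub>Y\<^esub> n))"
    using Suc by simp
  also have "\<dots> = inv\<^bsub>Y\<^esub> (y [^]\<^bsub>Y\<^esub> Suc n) \<otimes>\<^bsub>Y\<^esub> z \<otimes>\<^bsub>Y\<^esub> (y [^]\<^bsub>Y\<^esub> Suc n)"
    using assms yn by (simp add: conj_by_def nat_pow_Suc inv_mult_group m_assoc)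
  finally show ?case .
qed

lemma core_sub: "hnn_core A B phi \<subseteq> A"
proof
  fix x assume "x \<in> hnn_core A B phi"
  then have "x \<in> hnn_core_seq A B phi 0" unfolding hnn_core_def by blast
  then show "x \<in> A" by simp
qed

lemma core_phi: "x \<in> hnn_core A B phi \<Longrightarrow> phi x \<in> hnn_core A B phi"
  unfolding hnn_core_def
proof (simp, intro allI)
  fix k assume "\<forall>k. x \<in> hnn_core_seq A B phi k"
  then have "x \<in> hnn_core_seq A B phi (Suc k)" by blast
  then show "phi x \<in> hnn_core_seq A B phi k" by simp
qed

lemma core_phi_iter: "x \<in> hnn_core A B phi \<Longrightarrow> (phi ^^ n) x \<in> hnn_core A B phi"
  by (induction n) (auto intro: core_phi)

lemma id_iter: "(\<forall>x\<in>H. (f ^^ N) x = x) \<Longrightarrow> x \<in> H \<Longrightarrow> (f ^^ (N * q)) x = x"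
proof (induction q)
  case 0 then show ?case by simp
next
  case (Suc q)
  have "(f ^^ (N * Suc q)) x = (f ^^ N) ((f ^^ (N*q)) x)"
    by (simp add: funpow_add)
  then show ?case using Suc by simp
qed


lemma (in group) conj_mult:
  assumes "g \<in> carrier G" "x \<in> carrier G" "z \<in> carrier G"
  shows "conj_by G g (x \<otimes>\<^bsub>G\<^esub> z) = conj_by G g x \<otimes>\<^bsub>G\<^esub> conj_by G g z"
proof -
  have "inv g \<otimes> (x \<otimes> z) \<otimes> g = inv g \<otimes> x \<otimes> (g \<otimes> inv g) \<otimes> z \<otimes> g"
    using assms by (simp add: m_assoc)
  also have "\<dots> = inv g \<otimes> x \<otimes> g \<otimes> (inv g \<otimes> z \<otimes> g)"
    using assms by (simp add: m_assoc)
  finally show ?thesis by (simp add: conj_by_def)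
qed

lemma conj_closed:
  assumes "group G" "subgroup S G" "g \<in> S" "x \<in> S"
  shows "conj_by G g x \<in> S"
  using assms unfolding conj_by_def
  by (meson subgroup.m_closed subgroup.m_inv_closed)

lemma (in group) conj_inv_cancel:
  assumes "g \<in> carrier G" "x \<in> carrier G"
  shows "conj_by G (inv\<^bsub>G\<^esub> g) (conj_by G g x) = x"
proof -
  have "inv (inv g) \<otimes> (inv g \<otimes> x \<otimes> g) \<otimes> inv g = (g \<otimes> inv g) \<otimes> x \<otimes> (g \<otimes> inv g)"
    using assms by (simp add: m_assoc)
  then show ?thesis using assms by (simp add: conj_by_def)
qed

lemma (in group) conj_bij:
  assumes "subgroup S G" "g \<in> S"
  shows "bij_betw (conj_by G g) S S"
proof (rule bij_betw_byWitness[where f'="conj_by G (inv g)"])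
  have gc: "g \<in> carrier G" using assms(2) subgroup.subset[OF assms(1)] by (rule subsetD[rotated])
  have ig: "inv g \<in> S" by (rule subgroup.m_inv_closed[OF assms])
  have igc: "inv g \<in> carrier G" using gc by simp
  have Sc: "S \<subseteq> carrier G" using assms(1) subgroup.subset by blast
  show "\<forall>a\<in>S. conj_by G (inv g) (conj_by G g a) = a"
  proof
    fix a assume "a \<in> S"
    then have "a \<in> carrier G" using Sc by (rule subsetD[rotated])
    then show "conj_by G (inv g) (conj_by G g a) = a" by (rule conj_inv_cancel[OF gc])
  qed
  show "\<forall>a\<in>S. conj_by G g (conj_by G (inv g) a) = a"
  proof
    fix a assume "a \<in> S"
    then have "a \<in> carrier G" using Sc by (rule subsetD[rotated])
    from conj_inv_cancel[OF igc this] show "conj_by G g (conj_by G (inv g) a) = a"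
      using gc by simp
  qed
  show "conj_by G g ` S \<subseteq> S" using conj_closed[OF is_group assms(1,2)] by blast
  show "conj_by G (inv g) ` S \<subseteq> S" using conj_closed[OF is_group assms(1) ig] by blast
qed

lemma conj_pair:
  assumes "group Y" "z \<in> carrier Y"
  shows "hnn_pair Y (carrier Y) (carrier Y) (conj_by Y z)"
proof -
  interpret group Y by fact
  have "conj_by Y z \<in> hom Y Y"
    using assms group.conj_mult[OF assms(1,2)] by (auto simp: hom_def conj_by_def)
  moreover have "bij_betw (conj_by Y z) (carrier Y) (carrier Y)"
    using group.conj_bij[OF assms(1) subgroup_self assms(2)] .
  ultimately show ?thesis using assms
    by (simp add: hnn_pair_def iso_def subgroup_self)
qed

lemma conj_prod:
  assumes "group G" "g \<in> carrier G" "h \<in> carrier G" "x \<in> carrier G"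
  shows "conj_by G (g \<otimes>\<^bsub>G\<^esub> h) x = conj_by G h (conj_by G g x)"
proof -
  interpret group G by fact
  show ?thesis using assms by (simp add: conj_by_def inv_mult_group m_assoc)
qed

lemma hom_conj:
  assumes "group G" "group Y" "f \<in> hom G Y" "g \<in> carrier G" "x \<in> carrier G"
  shows "f (conj_by G g x) = conj_by Y (f g) (f x)"
proof -
  interpret group_hom G Y f using assms by (simp add: group_hom_def group_hom_axioms_def)
  show ?thesis using assms by (simp add: conj_by_def)
qed

theorem lemma3p1:
  fixes G :: "('a, 'b) monoid_scheme" and Y :: "('c, 'd) monoid_scheme"
    and A B :: "'a set" and phi :: "'a \<Rightarrow> 'a" and y :: 'c and alpha :: "'a \<Rightarrow> 'c"
  assumes "hnn_pair G A B phi"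
    and "group Y" and "y \<in> carrier Y"
    and "hnn_embedding G A B phi Y (carrier Y) (carrier Y) (conj_by Y y) alpha"
  shows "(\<forall>(p::nat) n. Factorial_Ring.prime p \<and> finite (carrier Y) \<and> order Y = p ^ n \<longrightarrow>
            (\<exists>k. perm_order (hnn_core A B phi) phi = p ^ k))
       \<and> (\<forall>a\<in>A. \<forall>b\<in>B.
            hnn_embedding G A B (\<lambda>x. conj_by G b (phi (conj_by G a x)))
              Y (carrier Y) (carrier Y)
              (conj_by Y (alpha a \<otimes>\<^bsub>Y\<^esub> y \<otimes>\<^bsub>Y\<^esub> alpha b)) alpha)"
proof (intro conjI ballI allI impI)
  have hp: "group G" "subgroup A G" "subgroup B G" "phi \<in> iso (G\<lparr>carrier := A\<rparr>) (G\<lparr>carrier := B\<rparr>)"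
    using assms(1) by (auto simp: hnn_pair_def)
  have em: "alpha \<in> hom G Y" "inj_on alpha (carrier G)"
    "\<forall>x\<in>A. conj_by Y y (alpha x) = alpha (phi x)"
    using assms(4) by (auto simp: hnn_embedding_def hnn_morphism_def)
  have Ac: "A \<subseteq> carrier G" "B \<subseteq> carrier G" using subgroup.subset[OF hp(2)] subgroup.subset[OF hp(3)] by auto
  have phihom: "\<forall>x\<in>A. \<forall>z\<in>A. phi (x \<otimes>\<^bsub>G\<^esub> z) = phi x \<otimes>\<^bsub>G\<^esub> phi z"
    using hp(4) by (auto simp: iso_def hom_def)
  have phibij: "bij_betw phi A B" using hp(4) by (simp add: iso_def)
  have phiAB: "phi x \<in> B" if "x \<in> A" for x using phibij that bij_betwE by blast
  {
    fix p n :: nat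
    assume pr: "Factorial_Ring.prime p \<and> finite (carrier Y) \<and> order Y = p ^ n"
    interpret Y: group Y by fact
    let ?H = "hnn_core A B phi"
    define M where "M = order Y"
    have yM: "y [^]\<^bsub>Y\<^esub> M = \<one>\<^bsub>Y\<^esub>" unfolding M_def using assms(3) by (simp add: Y.pow_order_eq_1)
    have Mpos: "0 < M" unfolding M_def using pr Y.order_gt_0_iff_finite by blast
    have it: "alpha ((phi ^^ m) x) = (conj_by Y y ^^ m) (alpha x)" if "x \<in> ?H" for x m
    proof (induction m)
      case 0 then show ?case by simp
    next
      case (Suc m)
      have "(phi ^^ m) x \<in> A" by (rule subsetD[OF core_sub core_phi_iter[OF that]])
      then have "conj_by Y y (alpha ((phi ^^ m) x)) = alpha (phi ((phi ^^ m) x))"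
        using em(3) by simp
      moreover have "(conj_by Y y ^^ Suc m) (alpha x) = conj_by Y y (alpha ((phi ^^ m) x))"
        using Suc.IH by simp
      ultimately show ?case by simp
    qed
    have idM: "\<forall>x\<in>?H. (phi ^^ M) x = x"
    proof
      fix x assume xH: "x \<in> ?H"
      have xc: "x \<in> carrier G" by (rule subsetD[OF Ac(1) subsetD[OF core_sub xH]])
      have pc: "(phi ^^ M) x \<in> carrier G" by (rule subsetD[OF Ac(1) subsetD[OF core_sub core_phi_iter[OF xH]]])
      have ax: "alpha x \<in> carrier Y" by (rule hom_in_carrier[OF em(1) xc])
      have "alpha ((phi ^^ M) x) = alpha x"
        using it[OF xH, of M] conj_iter[OF assms(2,3) ax, of M] yM ax by simp
      then show "(phi ^^ M) x = x" by (rule inj_onD[OF em(2) _ pc xc])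
    qed
    define N where "N = perm_order ?H phi"
    have ex: "\<exists>n. 0 < n \<and> (\<forall>x\<in>?H. (phi ^^ n) x = x)" using Mpos idM by blast
    have N: "0 < N" "\<forall>x\<in>?H. (phi ^^ N) x = x"
      using LeastI_ex[OF ex] unfolding N_def perm_order_def by auto
    have "\<forall>x\<in>?H. (phi ^^ (M mod N)) x = x"
    proof
      fix x assume xH: "x \<in> ?H"
      have "(phi ^^ M) x = (phi ^^ (M mod N + N * (M div N))) x" by simp
      also have "\<dots> = (phi ^^ (M mod N)) ((phi ^^ (N * (M div N))) x)"
        by (simp only: funpow_add comp_apply)
      finally have "(phi ^^ M) x = (phi ^^ (M mod N)) ((phi ^^ (N * (M div N))) x)" .
      then show "(phi ^^ (M mod N)) x = x" using id_iter[OF N(2) xH] idM xH by simp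
    qed
    then have "M mod N = 0"
      using not_less_Least[of "M mod N" "\<lambda>n. 0 < n \<and> (\<forall>x\<in>?H. (phi ^^ n) x = x)"]
        N(1) mod_less_divisor[OF N(1)] unfolding N_def perm_order_def by auto
    then have "N dvd p ^ n" using pr unfolding M_def by (auto simp: mod_eq_0_iff_dvd)
    then show "\<exists>k. perm_order ?H phi = p ^ k"
      using divides_primepow_nat pr unfolding N_def by blast
  }
  fix a b assume a: "a \<in> A" and b: "b \<in> B"
  interpret G: group G by fact
  interpret Y: group Y by fact
  have ac: "a \<in> carrier G" and bc: "b \<in> carrier G" using a b Ac by auto
  define phi' where "phi' = (\<lambda>x. conj_by G b (phi (conj_by G a x)))"
  have hom': "phi' \<in> hom (G\<lparr>carrier := A\<rparr>) (G\<lparr>carrier := B\<rparr>)"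
  proof -
    have "phi' x \<otimes>\<^bsub>G\<^esub> phi' z = phi' (x \<otimes>\<^bsub>G\<^esub> z)" if "x \<in> A" "z \<in> A" for x z
    proof -
      have ca: "conj_by G a x \<in> A" "conj_by G a z \<in> A" using conj_closed[OF hp(1,2) a] that by auto
      then have "phi (conj_by G a x) \<in> B" "phi (conj_by G a z) \<in> B" using phiAB by auto
      moreover have "x \<in> carrier G" "z \<in> carrier G" using that Ac by auto
      moreover have "conj_by G a (x \<otimes>\<^bsub>G\<^esub> z) = conj_by G a x \<otimes>\<^bsub>G\<^esub> conj_by G a z"
        using group.conj_mult[OF hp(1) ac] calculation by simp
      ultimately show ?thesis unfolding phi'_def
        using group.conj_mult[OF hp(1) bc] phihom ca Ac by (simp add: subsetD)
    qed
    moreover have "phi' x \<in> B" if "x \<in> A" for x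
      unfolding phi'_def using conj_closed[OF hp(1,3) b] phiAB conj_closed[OF hp(1,2) a] that by simp
    ultimately show ?thesis by (auto simp: hom_def)
  qed
  have bij': "bij_betw phi' A B" unfolding phi'_def
    using bij_betw_trans[OF bij_betw_trans[OF group.conj_bij[OF hp(1,2) a] phibij] group.conj_bij[OF hp(1,3) b]]
    by (simp add: comp_def)
  have pair': "hnn_pair G A B phi'" using hp hom' bij' by (simp add: hnn_pair_def iso_def)
  have yc: "alpha a \<otimes>\<^bsub>Y\<^esub> y \<otimes>\<^bsub>Y\<^esub> alpha b \<in> carrier Y"
    using hom_in_carrier[OF em(1) ac] hom_in_carrier[OF em(1) bc] assms(3) by simp
  have compat: "conj_by Y (alpha a \<otimes>\<^bsub>Y\<^esub> y \<otimes>\<^bsub>Y\<^esub> alpha b) (alpha x) = alpha (phi' x)" if x: "x \<in> A" for x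
  proof -
    have xc: "x \<in> carrier G" using x Ac by auto
    have aa: "alpha a \<in> carrier Y" "alpha b \<in> carrier Y" "alpha x \<in> carrier Y"
      using hom_in_carrier[OF em(1)] ac bc xc by auto
    have cax: "conj_by G a x \<in> A" using conj_closed[OF hp(1,2) a x] .
    then have cc: "conj_by G a x \<in> carrier G" "phi (conj_by G a x) \<in> carrier G" using Ac phiAB by auto
    have "alpha (phi' x) = conj_by Y (alpha b) (alpha (phi (conj_by G a x)))"
      unfolding phi'_def using hom_conj[OF hp(1) assms(2) em(1) bc cc(2)] .
    also have "\<dots> = conj_by Y (alpha b) (conj_by Y y (alpha (conj_by G a x)))"
      using em(3) cax by simp
    also have "\<dots> = conj_by Y (alpha b) (conj_by Y y (conj_by Y (alpha a) (alpha x)))"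
      using hom_conj[OF hp(1) assms(2) em(1) ac xc] by simp
    also have "\<dots> = conj_by Y (alpha a \<otimes>\<^bsub>Y\<^esub> y \<otimes>\<^bsub>Y\<^esub> alpha b) (alpha x)"
      using aa assms(3) by (simp add: conj_by_def Y.inv_mult_group Y.m_assoc)
    finally show ?thesis by simp
  qed
  show "hnn_embedding G A B (\<lambda>x. conj_by G b (phi (conj_by G a x))) Y (carrier Y) (carrier Y)
              (conj_by Y (alpha a \<otimes>\<^bsub>Y\<^esub> y \<otimes>\<^bsub>Y\<^esub> alpha b)) alpha"
    unfolding hnn_embedding_def hnn_morphism_def
  proof (intro conjI)
    show "alpha ` A \<subseteq> carrier Y" "alpha ` B \<subseteq> carrier Y"
      using hom_in_carrier[OF em(1)] Ac by auto
    show "hnn_pair G A B (\<lambda>x. conj_by G b (phi (conj_by G a x)))" using pair' unfolding phi'_def .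
    show "hnn_pair Y (carrier Y) (carrier Y) (conj_by Y (alpha a \<otimes>\<^bsub>Y\<^esub> y \<otimes>\<^bsub>Y\<^esub> alpha b))"
      by (rule conj_pair[OF assms(2) yc])
    show "alpha \<in> hom G Y" by (rule em(1))
    show "inj_on alpha (carrier G)" by (rule em(2))
    show "\<forall>x\<in>A. conj_by Y (alpha a \<otimes>\<^bsub>Y\<^esub> y \<otimes>\<^bsub>Y\<^esub> alpha b) (alpha x) =
          alpha (conj_by G b (phi (conj_by G a x)))"
      using compat unfolding phi'_def by blast
  qed
qed

end
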